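(* For every $n\ge1$ and every unlabeled binary tree $T\in\mathrm{URL}_n$, there exists a bijection $\Omega$ from $\mathrm{RS}(T)$ to $\mathrm{And}^{II}(T)$.
   Context: A binary tree is a rooted tree in which every vertex has no child, a single left child, a single right child, or both. The map $\Psi$ sends a word $\pi$ of distinct integers to an increasing binary tree: $\Psi(\emptyset)=\emptyset$; otherwise write $\pi=\sigma\, i\,\tau$ with $i$ the least letter, and let $\Psi(\pi)$ have root $i$, left subtree $\Psi(\sigma)$, right subtree $\Psi(\tau)$. The shape of a labeled tree is its underlying unlabeled binary tree. $\mathrm{URL}_n$ is the set of unlabeled rooted binary trees with $n$ vertices in which no vertex has a left child but no right child. Andr\'e II permutations: the empty word and one-letter words are Andr\'e II; a word $\sigma$ of $n\ge2$ distinct integers, written $\sigma=\tau\,\min(\sigma)\,\tau'$, is Andr\'e II if $\tau,\tau'$ are Andr\'e II and the smallest letter of $\tau\tau'$ lies in $\tau'$. A permutation $\sigma$ of $[n]$ is simsun if $\sigma_n=n$ and for each $k\in[n]$ the subword formed by the letters $1,\dots,k$ has no index $i$ with $w_i>w_{i+1}>w_{i+2}$. $\mathrm{RS}(T)$ (resp. $\mathrm{And}^{II}(T)$) is the set of simsun (resp. Andr\'e II) permutations $\sigma$ of $[n]$ with $\mathrm{shape}(\Psi(\sigma))=T$. *)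

theory Defs
  imports Main "HOL-Library.Tree"
begin

text \<open>Words of distinct integers are represented as lists of naturals (only permutations
of [n] and their factors occur). Labeled binary trees are HOL-Library trees;
unlabeled binary trees are trees of type unit tree (Leaf = empty tree).\<close>

definition left_part :: "nat list \<Rightarrow> nat list" where
  "left_part xs = takeWhile (\<lambda>x. x \<noteq> Min (set xs)) xs"

definition right_part :: "nat list \<Rightarrow> nat list" where
  "right_part xs = tl (dropWhile (\<lambda>x. x \<noteq> Min (set xs)) xs)"

lemma length_takeWhile_lt: "x \<in> set xs \<Longrightarrow> \<not> P x \<Longrightarrow> length (takeWhile P xs) < length xs"
  by (induction xs) auto

lemma length_left_part: "xs \<noteq> [] \<Longrightarrow> length (left_part xs) < length xs"
proof -
  assume "xs \<noteq> []"
  then have "Min (set xs) \<in> set xs" by simp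
  then show ?thesis unfolding left_part_def
    by (intro length_takeWhile_lt) auto
qed

lemma length_right_part: "xs \<noteq> [] \<Longrightarrow> length (right_part xs) < length xs"
proof -
  assume "xs \<noteq> []"
  then have "Min (set xs) \<in> set xs" by simp
  then have "dropWhile (\<lambda>x. x \<noteq> Min (set xs)) xs \<noteq> []" by (simp add: dropWhile_eq_Nil_conv)
  then show ?thesis unfolding right_part_def
  proof -
    assume "dropWhile (\<lambda>x. x \<noteq> Min (set xs)) xs \<noteq> []"
    moreover have "length (dropWhile (\<lambda>x. x \<noteq> Min (set xs)) xs) \<le> length xs"
      by (rule length_dropWhile_le)
    ultimately show "length (tl (dropWhile (\<lambda>x. x \<noteq> Min (set xs)) xs)) < length xs"
      by (cases "dropWhile (\<lambda>x. x \<noteq> Min (set xs)) xs") auto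
  qed
qed

function Psi :: "nat list \<Rightarrow> nat tree" where
  "Psi xs = (if xs = [] then Leaf
             else Node (Psi (left_part xs)) (Min (set xs)) (Psi (right_part xs)))"
  by pat_completeness auto
termination
  by (relation "measure length") (auto simp: length_left_part length_right_part)

definition shape :: "'a tree \<Rightarrow> unit tree" where
  "shape t = map_tree (\<lambda>_. ()) t"

fun no_left_only :: "unit tree \<Rightarrow> bool" where
  "no_left_only Leaf = True"
| "no_left_only (Node l _ r) =
     (\<not> (l \<noteq> Leaf \<and> r = Leaf) \<and> no_left_only l \<and> no_left_only r)"

definition URL :: "nat \<Rightarrow> unit tree set" where
  "URL n = {T. size T = n \<and> no_left_only T}"

function andre_II :: "nat list \<Rightarrow> bool" where
  "andre_II xs = (if length xs \<le> 1 then True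
     else andre_II (left_part xs) \<and> andre_II (right_part xs) \<and>
          Min (set (left_part xs @ right_part xs)) \<in> set (right_part xs))"
  by pat_completeness auto
termination
  by (relation "measure length") (auto intro: length_left_part length_right_part)

definition perm_of :: "nat \<Rightarrow> nat list \<Rightarrow> bool" where
  "perm_of n \<sigma> \<longleftrightarrow> distinct \<sigma> \<and> set \<sigma> = {1..n}"

definition double_descent_free :: "nat list \<Rightarrow> bool" where
  "double_descent_free w \<longleftrightarrow>
     \<not> (\<exists>i. i + 2 < length w \<and> w ! i > w ! (i+1) \<and> w ! (i+1) > w ! (i+2))"

definition simsun :: "nat \<Rightarrow> nat list \<Rightarrow> bool" where
  "simsun n \<sigma> \<longleftrightarrow> perm_of n \<sigma> \<and> \<sigma> ! (n - 1) = n \<and>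
     (\<forall>k\<in>{1..n}. double_descent_free (filter (\<lambda>x. x \<le> k) \<sigma>))"

definition RS :: "nat \<Rightarrow> unit tree \<Rightarrow> nat list set" where
  "RS n T = {\<sigma>. simsun n \<sigma> \<and> shape (Psi \<sigma>) = T}"

definition AndII :: "nat \<Rightarrow> unit tree \<Rightarrow> nat list set" where
  "AndII n T = {\<sigma>. perm_of n \<sigma> \<and> andre_II \<sigma> \<and> shape (Psi \<sigma>) = T}"

end

theory Submission
  imports Defs "HOL-Library.Multiset"
begin

declare Psi.simps[simp del] andre_II.simps[simp del]

fun rt :: "nat tree \<Rightarrow> nat" where
  "rt Leaf = 0" | "rt (Node l a r) = a"

fun inc :: "nat tree \<Rightarrow> bool" where
  "inc Leaf = True"
| "inc (Node l a r) = ((\<forall>x\<in>set_tree l. a < x) \<and> (\<forall>x\<in>set_tree r. a < x) \<and> inc l \<and> inc r)"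

fun aT :: "nat tree \<Rightarrow> bool" where
  "aT Leaf = True"
| "aT (Node l a r) = (aT l \<and> aT r \<and> (r = Leaf \<longrightarrow> l = Leaf) \<and> (l \<noteq> Leaf \<longrightarrow> r \<noteq> Leaf \<and> rt r < rt l))"

fun rsT :: "nat tree \<Rightarrow> bool" where
  "rsT Leaf = True" | "rsT (Node l a r) = (aT l \<and> rsT r)"

fun eT :: "nat tree \<Rightarrow> bool" where
  "eT Leaf = True" | "eT (Node l a r) = (if r = Leaf then l = Leaf else eT l \<and> eT r)"

fun dT :: "nat tree \<Rightarrow> bool" where
  "dT Leaf = True" | "dT (Node l a r) = (eT l \<and> dT r)"

fun prune :: "nat \<Rightarrow> nat tree \<Rightarrow> nat tree" where
  "prune k Leaf = Leaf"
| "prune k (Node l a r) = (if a \<le> k then Node (prune k l) a (prune k r) else Leaf)"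

fun lastsp :: "nat tree \<Rightarrow> nat" where
  "lastsp Leaf = 0" | "lastsp (Node l a r) = (if r = Leaf then a else lastsp r)"

fun Gm :: "nat tree \<Rightarrow> nat \<Rightarrow> nat tree" where
  "Gm Leaf c = Leaf" | "Gm (Node l b r) c = Node l c (Gm r b)"

fun Fm :: "nat tree \<Rightarrow> nat \<Rightarrow> nat tree" where
  "Fm Leaf c = Leaf" | "Fm (Node l a r) c = Node l (if r = Leaf then c else rt r) (Fm r c)"

fun dd :: "nat list \<Rightarrow> bool" where
  "dd (x#y#z#w) = (\<not>(y < x \<and> z < y) \<and> dd (y#z#w))" | "dd _ = True"

lemma ex_nat_split: "(\<exists>i::nat. Q i) \<longleftrightarrow> Q 0 \<or> (\<exists>j. Q (Suc j))"
  by (metis not0_implies_Suc)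

lemma ddf_dd: "double_descent_free xs = dd xs"
proof (induction xs rule: dd.induct)
  case (1 x y z w)
  have "double_descent_free (x#y#z#w) \<longleftrightarrow> \<not>(y < x \<and> z < y) \<and> double_descent_free (y#z#w)"
    unfolding double_descent_free_def by (subst ex_nat_split) auto
  then show ?case using 1 by simp
qed (auto simp: double_descent_free_def)

lemma dd_append: "dd (xs @ a # ys) \<longleftrightarrow> dd (xs @ [a]) \<and> dd (a # ys) \<and>
   \<not>(xs \<noteq> [] \<and> ys \<noteq> [] \<and> a < last xs \<and> hd ys < a)"
proof (induction xs rule: dd.induct)
  case (1 x y z w)
  then show ?case by simp
next
  case "2_1" then show ?case by simp
next
  case ("2_2" x) then show ?case by (cases ys rule: dd.cases) auto
next
  case ("2_3" x y) then show ?case by (cases ys rule: dd.cases) auto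
qed

lemma dd_Cons_small: "ys = [] \<or> a < hd ys \<Longrightarrow> dd (a # ys) = dd ys"
  by (cases ys rule: dd.cases) auto

lemma inc_rt_less: "inc t \<Longrightarrow> x \<in> set_tree t \<Longrightarrow> rt t \<le> x"
  by (cases t) auto

lemma inorder_nonempty: "t \<noteq> Leaf \<Longrightarrow> inorder t \<noteq> []"
  by (cases t) auto

lemma dd_eT: "inc t \<Longrightarrow> (\<forall>x\<in>set_tree t. c < x) \<Longrightarrow> dd (inorder t @ [c]) = eT t"
proof (induction t arbitrary: c)
  case Leaf then show ?case by simp
next
  case (Node l a r)
  have lastl: "l \<noteq> Leaf \<Longrightarrow> a < last (inorder l)"
    using Node.prems last_in_set[OF inorder_nonempty, of l] by auto
  have hdr: "r \<noteq> Leaf \<Longrightarrow> a < hd (inorder r)"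
    using Node.prems hd_in_set[OF inorder_nonempty, of r] by auto
  have e1: "dd (inorder l @ [a]) = eT l" using Node.prems by (intro Node.IH(1)) auto
  show ?case
  proof (cases "r = Leaf")
    case True
    then show ?thesis using lastl e1 Node.prems
      by (auto simp: dd_append[of "inorder l" a "[c]"])
  next
    case False
    have "dd (a # inorder r @ [c]) = eT r"
      using Node.IH(2)[of c] Node.prems hdr False by (subst dd_Cons_small) (auto simp: hd_append inorder_nonempty)
    then show ?thesis using False hdr e1 Node.prems
      by (auto simp: dd_append[of "inorder l" a "inorder r @ [c]"] hd_append inorder_nonempty)
  qed
qed

lemma dd_dT: "inc t \<Longrightarrow> dd (inorder t) = dT t"
proof (induction t)
  case Leaf then show ?case by simp
next
  case (Node l a r)
  have hdr: "r \<noteq> Leaf \<Longrightarrow> a < hd (inorder r)"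
    using Node.prems hd_in_set[OF inorder_nonempty, of r] by auto
  have e1: "dd (inorder l @ [a]) = eT l" using Node.prems by (intro dd_eT) auto
  have "dd (a # inorder r) = dT r" using Node hdr by (subst dd_Cons_small) auto
  then show ?case using hdr e1
    by (auto simp: dd_append[of "inorder l" a "inorder r"])
qed

lemma set_prune: "set_tree (prune k t) \<subseteq> set_tree t"
  by (induction t) auto

lemma inc_prune: "inc t \<Longrightarrow> inc (prune k t)"
  by (induction t) (use set_prune in fastforce)+

lemma inorder_prune: "inc t \<Longrightarrow> inorder (prune k t) = filter (\<lambda>x. x \<le> k) (inorder t)"
proof (induction t)
  case Leaf then show ?case by simp
next
  case (Node l a r)
  show ?case
  proof (cases "a \<le> k")
    case True then show ?thesis using Node by auto
  next
    case False
    then have "filter (\<lambda>x. x \<le> k) (inorder (Node l a r)) = []"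
      using Node.prems by (auto simp: filter_empty_conv)
    then show ?thesis using False by simp
  qed
qed

lemma prune_Leaf_small: "inc t \<Longrightarrow> (\<forall>x\<in>set_tree t. k < x) \<Longrightarrow> prune k t = Leaf"
  by (cases t) auto

lemma prune_big: "(\<forall>x\<in>set_tree t. x \<le> k) \<Longrightarrow> prune k t = t"
  by (induction t) auto

lemma prune_Leaf_iff: "prune k t = Leaf \<longleftrightarrow> t = Leaf \<or> k < rt t"
  by (cases t) auto

lemma bound_tree: "\<exists>K. \<forall>x\<in>set_tree (t::nat tree). x \<le> K"
  using finite_nat_set_iff_bounded_le finite_set_tree by blast

lemma rt_in: "t \<noteq> Leaf \<Longrightarrow> rt t \<in> set_tree t"
  by (cases t) auto

lemma EA: "inc t \<Longrightarrow> distinct (inorder t) \<Longrightarrow> (\<forall>k. eT (prune k t)) = aT t"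
proof (induction t)
  case Leaf then show ?case by simp
next
  case (Node l a r)
  have smallL: "k < a \<Longrightarrow> prune k l = Leaf" for k
    using Node.prems by (intro prune_Leaf_small) auto
  have smallR: "k < a \<Longrightarrow> prune k r = Leaf" for k
    using Node.prems by (intro prune_Leaf_small) auto
  have IHl: "(\<forall>k. eT (prune k l)) = aT l" using Node by auto
  have IHr: "(\<forall>k. eT (prune k r)) = aT r" using Node by auto
  have disj: "set_tree l \<inter> set_tree r = {}" using Node.prems by auto
  have al: "l \<noteq> Leaf \<Longrightarrow> a \<le> rt l" using Node.prems rt_in[of l] by auto
  have ar: "r \<noteq> Leaf \<Longrightarrow> a \<le> rt r" using Node.prems rt_in[of r] by auto
  have incl: "inc l" "inc r" using Node.prems by auto
  show ?case
  proof
    assume H: "\<forall>k. eT (prune k (Node l a r))"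
    obtain K where K: "\<forall>x\<in>set_tree (Node l a r). x \<le> K" using bound_tree by blast
    have HK: "eT (Node l a r)" using H[rule_format, of K] prune_big[OF K] by simp
    have Hk: "a \<le> k \<Longrightarrow> (if prune k r = Leaf then prune k l = Leaf else eT (prune k l) \<and> eT (prune k r))" for k
      using H[rule_format, of k] by simp
    have el: "eT (prune k l)" for k
    proof (cases "a \<le> k")
      case True then show ?thesis using Hk[OF True] by (auto split: if_splits)
    next
      case False then show ?thesis using smallL by simp
    qed
    have er: "eT (prune k r)" for k
    proof (cases "a \<le> k")
      case True then show ?thesis using Hk[OF True] by (auto split: if_splits)
    next
      case False then show ?thesis using smallR by simp
    qed
    have c1: "r = Leaf \<longrightarrow> l = Leaf" using HK by (auto split: if_splits)
    have c2: "l \<noteq> Leaf \<longrightarrow> r \<noteq> Leaf \<and> rt r < rt l"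
    proof
      assume ln: "l \<noteq> Leaf"
      then have rn: "r \<noteq> Leaf" using c1 by blast
      have ne: "rt r \<noteq> rt l" using disj rt_in[OF ln] rt_in[OF rn] by auto
      show "r \<noteq> Leaf \<and> rt r < rt l"
      proof (rule ccontr)
        assume "\<not> (r \<noteq> Leaf \<and> rt r < rt l)"
        then have lt: "rt l < rt r" using rn ne by auto
        have "prune (rt l) r = Leaf" using lt by (simp add: prune_Leaf_iff)
        moreover have "prune (rt l) l \<noteq> Leaf" using ln by (simp add: prune_Leaf_iff)
        ultimately show False using Hk[OF al[OF ln]] by simp
      qed
    qed
    show "aT (Node l a r)" using el er IHl IHr c1 c2 by simp
  next
    assume A: "aT (Node l a r)"
    have el: "eT (prune k l)" for k using A IHl by simp
    have er: "eT (prune k r)" for k using A IHr by simp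
    show "\<forall>k. eT (prune k (Node l a r))"
    proof
      fix k
      show "eT (prune k (Node l a r))"
      proof (cases "a \<le> k")
        case False then show ?thesis by simp
      next
        case True
        have "prune k r = Leaf \<Longrightarrow> prune k l = Leaf"
        proof -
          assume pr: "prune k r = Leaf"
          show "prune k l = Leaf"
          proof (cases "l = Leaf")
            case True then show ?thesis by simp
          next
            case False
            then have "r \<noteq> Leaf" "rt r < rt l" using A by auto
            then show ?thesis using pr by (auto simp: prune_Leaf_iff)
          qed
        qed
        then show ?thesis using True el er by simp
      qed
    qed
  qed
qed

lemma DR: "inc t \<Longrightarrow> distinct (inorder t) \<Longrightarrow> (\<forall>k. dT (prune k t)) = rsT t"
proof (induction t)
  case Leaf then show ?case by simp
next
  case (Node l a r)
  have smallL: "k < a \<Longrightarrow> prune k l = Leaf" for k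
    using Node.prems by (intro prune_Leaf_small) auto
  have smallR: "k < a \<Longrightarrow> prune k r = Leaf" for k
    using Node.prems by (intro prune_Leaf_small) auto
  have IHr: "(\<forall>k. dT (prune k r)) = rsT r" using Node by auto
  have EAl: "(\<forall>k. eT (prune k l)) = aT l" using Node.prems by (intro EA) auto
  have "(\<forall>k. dT (prune k (Node l a r))) = ((\<forall>k. eT (prune k l)) \<and> (\<forall>k. dT (prune k r)))"
  proof
    assume H: "\<forall>k. dT (prune k (Node l a r))"
    have "eT (prune k l) \<and> dT (prune k r)" for k
    proof (cases "a \<le> k")
      case True then show ?thesis using H[rule_format, of k] by simp
    next
      case False then show ?thesis using smallL smallR by simp
    qed
    then show "(\<forall>k. eT (prune k l)) \<and> (\<forall>k. dT (prune k r))" by blast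
  qed auto
  then show ?case using IHr EAl by simp
qed

lemma split_min: "xs \<noteq> [] \<Longrightarrow> xs = left_part xs @ Min (set xs) # right_part xs"
proof -
  assume ne: "xs \<noteq> []"
  let ?m = "Min (set xs)"
  have m: "?m \<in> set xs" using ne by simp
  have "dropWhile (\<lambda>x. x \<noteq> ?m) xs \<noteq> []" using m by simp
  moreover have "dropWhile (\<lambda>x. x \<noteq> ?m) xs \<noteq> [] \<Longrightarrow> hd (dropWhile (\<lambda>x. x \<noteq> ?m) xs) = ?m"
    using hd_dropWhile[of "\<lambda>x. x \<noteq> ?m" xs] by simp
  ultimately have "dropWhile (\<lambda>x. x \<noteq> ?m) xs = ?m # right_part xs"
    unfolding right_part_def by (cases "dropWhile (\<lambda>x. x \<noteq> ?m) xs") auto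
  then show ?thesis unfolding left_part_def by (metis takeWhile_dropWhile_id)
qed

lemma inorder_Psi: "inorder (Psi xs) = xs"
proof (induction xs rule: Psi.induct)
  case (1 xs)
  show ?case
  proof (cases "xs = []")
    case True then show ?thesis by (simp add: Psi.simps)
  next
    case False
    then show ?thesis using 1 split_min[OF False] by (subst Psi.simps) simp
  qed
qed

lemma set_Psi: "set_tree (Psi xs) = set xs"
  by (metis inorder_Psi set_inorder)

lemma inc_Psi: "distinct xs \<Longrightarrow> inc (Psi xs)"
proof (induction xs rule: Psi.induct)
  case (1 xs)
  show ?case
  proof (cases "xs = []")
    case True then show ?thesis by (simp add: Psi.simps)
  next
    case False
    let ?m = "Min (set xs)"
    have sp: "xs = left_part xs @ ?m # right_part xs" using split_min[OF False] .
    have d: "distinct (left_part xs)" "distinct (right_part xs)"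
      "?m \<notin> set (left_part xs)" "?m \<notin> set (right_part xs)"
    proof -
      have "distinct (left_part xs @ ?m # right_part xs)" using 1(3) sp by simp
      then show "distinct (left_part xs)" "distinct (right_part xs)"
        "?m \<notin> set (left_part xs)" "?m \<notin> set (right_part xs)" by auto
    qed
    have ge: "x \<in> set xs \<Longrightarrow> ?m \<le> x" for x by simp
    have "\<forall>x\<in>set (left_part xs). ?m < x"
      using d ge sp by (metis Un_iff le_neq_implies_less set_append)
    moreover have "\<forall>x\<in>set (right_part xs). ?m < x"
      using d ge sp by (metis Un_iff le_neq_implies_less set_append list.set_intros(2))
    ultimately show ?thesis using 1 False d by (subst Psi.simps) (simp add: set_Psi)
  qed
qed

lemma lr_parts: "inc (Node l a r) \<Longrightarrow> distinct (inorder (Node l a r)) \<Longrightarrow>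
   Min (set (inorder (Node l a r))) = a \<and> left_part (inorder (Node l a r)) = inorder l \<and>
   right_part (inorder (Node l a r)) = inorder r"
proof -
  assume i: "inc (Node l a r)" and d: "distinct (inorder (Node l a r))"
  have m: "Min (set (inorder (Node l a r))) = a"
    using i by (intro Min_eqI) (auto intro: less_imp_le)
  have na: "a \<notin> set (inorder l)" using d by simp
  have tw: "takeWhile (\<lambda>x. x \<noteq> a) (inorder l @ a # inorder r) = inorder l"
    using na by (subst takeWhile_append2) auto
  have dw: "dropWhile (\<lambda>x. x \<noteq> a) (inorder l @ a # inorder r) = a # inorder r"
    using na by (subst dropWhile_append2) auto
  show ?thesis using m tw dw by (simp add: left_part_def right_part_def)
qed

lemma Psi_inorder: "inc t \<Longrightarrow> distinct (inorder t) \<Longrightarrow> Psi (inorder t) = t"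
proof (induction t)
  case Leaf then show ?case by (simp add: Psi.simps)
next
  case (Node l a r)
  have "Psi (inorder (Node l a r)) = Node (Psi (inorder l)) a (Psi (inorder r))"
    using lr_parts[OF Node.prems] by (subst Psi.simps) simp
  then show ?case using Node by simp
qed

lemma inc_Min: "inc t \<Longrightarrow> t \<noteq> Leaf \<Longrightarrow> Min (set_tree t) = rt t"
  by (cases t) (auto intro!: Min_eqI intro: less_imp_le)

lemma andre_aT: "inc t \<Longrightarrow> distinct (inorder t) \<Longrightarrow> andre_II (inorder t) = aT t"
proof (induction t)
  case Leaf then show ?case by (simp add: andre_II.simps)
next
  case (Node l a r)
  note lr = lr_parts[OF Node.prems]
  have IH: "andre_II (inorder l) = aT l" "andre_II (inorder r) = aT r" using Node by auto
  have disj: "set_tree l \<inter> set_tree r = {}" using Node.prems by auto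
  show ?case
  proof (cases "l = Leaf \<and> r = Leaf")
    case True then show ?thesis by (subst andre_II.simps) simp
  next
    case False
    have len: "\<not> length (inorder (Node l a r)) \<le> 1"
      using False inorder_nonempty[of l] inorder_nonempty[of r] by (cases "inorder l"; cases "inorder r") auto
    have "Min (set (inorder l @ inorder r)) \<in> set (inorder r) \<longleftrightarrow> (r \<noteq> Leaf \<and> (l \<noteq> Leaf \<longrightarrow> rt r < rt l))"
    proof (cases "l = Leaf")
      case True then show ?thesis using False by (auto simp: inorder_nonempty)
    next
      case ln: False
      show ?thesis
      proof (cases "r = Leaf")
        case True then show ?thesis using ln
          by (simp add: inc_Min Node.prems)
      next
        case rn: False
        have ml: "Min (set_tree l) = rt l" "Min (set_tree r) = rt r" using Node.prems ln rn by (auto simp: inc_Min)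
        have "Min (set_tree l \<union> set_tree r) = min (rt l) (rt r)"
          using ml ln rn by (subst Min_Un) (auto simp: set_inorder[symmetric] inorder_nonempty simp del: set_inorder)
        moreover have "rt l \<notin> set_tree r" using disj rt_in[OF ln] by auto
        moreover have "rt r \<in> set_tree r" using rt_in[OF rn] .
        moreover have "rt l \<noteq> rt r" using calculation by auto
        ultimately show ?thesis using ln rn by (auto simp: min_def)
      qed
    qed
    then show ?thesis using len lr IH by (subst andre_II.simps) (auto)
  qed
qed

lemma shape_Gm: "shape (Gm t a) = shape t"
  by (induction t arbitrary: a) (auto simp: shape_def)

lemma shape_Fm: "shape (Fm t a) = shape t"
  by (induction t arbitrary: a) (auto simp: shape_def)

lemma shape_map: "shape (map_tree f t) = shape t"
  by (induction t) (auto simp: shape_def)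

lemma Gm_Leaf_iff: "Gm t a = Leaf \<longleftrightarrow> t = Leaf"
  by (cases t) auto

lemma rt_Gm: "t \<noteq> Leaf \<Longrightarrow> rt (Gm t a) = a"
  by (cases t) auto

lemma set_Gm: "set_tree (Gm t a) \<subseteq> insert a (set_tree t)"
  by (induction t arbitrary: a) auto

lemma inc_Gm: "inc t \<Longrightarrow> \<forall>x\<in>set_tree t. a < x \<Longrightarrow> inc (Gm t a)"
proof (induction t arbitrary: a)
  case Leaf then show ?case by simp
next
  case (Node l b r)
  have "\<forall>x\<in>set_tree (Gm r b). a < x" using set_Gm[of r b] Node.prems by auto
  then show ?case using Node by auto
qed

lemma aT_Gm: "inc t \<Longrightarrow> rsT t \<Longrightarrow> no_left_only (shape t) \<Longrightarrow> aT (Gm t a)"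
proof (induction t arbitrary: a)
  case Leaf then show ?case by simp
next
  case (Node l b r)
  have nl: "no_left_only (shape l)" "no_left_only (shape r)" "\<not> (l \<noteq> Leaf \<and> r = Leaf)"
    using Node.prems(3) by (auto simp: shape_def)
  have IH: "aT (Gm r b)" using Node by (auto simp: shape_def)
  have "l \<noteq> Leaf \<Longrightarrow> b < rt l" using Node.prems(1) rt_in[of l] by auto
  then show ?case using IH nl Node.prems by (auto simp: Gm_Leaf_iff rt_Gm)
qed

lemma mset_Gm: "t \<noteq> Leaf \<Longrightarrow> mset (inorder (Gm t a)) + {#lastsp t#} = mset (inorder t) + {#a#}"
proof (induction t arbitrary: a)
  case Leaf then show ?case by simp
next
  case (Node l b r)
  show ?case
  proof (cases "r = Leaf")
    case True then show ?thesis by simp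
  next
    case False
    then show ?thesis using Node.IH(2)[OF False, of b] by (simp add: add.commute add.left_commute)
  qed
qed

lemma set_Fm: "set_tree (Fm t c) \<subseteq> insert c (set_tree t)"
  by (induction t arbitrary: c) (auto dest: rt_in)

lemma inc_Fm: "inc t \<Longrightarrow> aT t \<Longrightarrow> \<forall>x\<in>set_tree t. x < c \<Longrightarrow> inc (Fm t c)"
proof (induction t)
  case Leaf then show ?case by simp
next
  case (Node l a r)
  show ?case
  proof (cases "r = Leaf")
    case True
    then have "l = Leaf" using Node.prems by simp
    then show ?thesis using True by simp
  next
    case False
    have rl: "l \<noteq> Leaf \<Longrightarrow> rt r < rt l" using Node.prems by simp
    have "\<forall>x\<in>set_tree l. rt r < x"
      using rl Node.prems(1) inc_rt_less[of l] by fastforce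
    moreover have "\<forall>x\<in>set_tree (Fm r c). rt r < x"
    proof -
      obtain l2 b2 r2 where rr: "r = Node l2 b2 r2" using False by (cases r) auto
      have "set_tree (Fm r2 c) \<subseteq> insert c (set_tree r2)" by (rule set_Fm)
      moreover have "rt r2 \<in> set_tree r2 \<or> r2 = Leaf" using rt_in by blast
      ultimately show ?thesis using Node.prems rr by auto
    qed
    moreover have "inc (Fm r c)" using Node by auto
    moreover have "\<forall>x\<in>set_tree (Fm r c). a < x"
      using set_Fm[of r c] Node.prems by auto
    ultimately show ?thesis using False Node by auto
  qed
qed

lemma rsT_Fm: "aT t \<Longrightarrow> rsT (Fm t c)"
  by (induction t) auto

lemma lastsp_Fm: "t \<noteq> Leaf \<Longrightarrow> lastsp (Fm t c) = c"
proof (induction t)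
  case Leaf then show ?case by simp
next
  case (Node l a r) then show ?case by (cases r) auto
qed

lemma mset_Fm: "t \<noteq> Leaf \<Longrightarrow> mset (inorder (Fm t c)) + {#rt t#} = mset (inorder t) + {#c#}"
proof (induction t)
  case Leaf then show ?case by simp
next
  case (Node l a r)
  show ?case
  proof (cases "r = Leaf")
    case True then show ?thesis by simp
  next
    case False
    then show ?thesis using Node.IH(2)[OF False] by (simp add: add.commute add.left_commute)
  qed
qed

lemma GF: "t \<noteq> Leaf \<Longrightarrow> Gm (Fm t c) (rt t) = t"
proof (induction t)
  case Leaf then show ?case by simp
next
  case (Node l a r) then show ?case by (cases r) auto
qed

lemma FG: "t \<noteq> Leaf \<Longrightarrow> Fm (Gm t a) (lastsp t) = t"
proof (induction t arbitrary: a)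
  case Leaf then show ?case by simp
next
  case (Node l b r) then show ?case by (cases r) (auto simp: rt_Gm Gm_Leaf_iff)
qed

lemma last_inorder: "t \<noteq> Leaf \<Longrightarrow> last (inorder t) = lastsp t"
proof (induction t)
  case Leaf then show ?case by simp
next
  case (Node l a r) then show ?case by (cases r) (auto simp: inorder_nonempty)
qed

lemma rt_map: "t \<noteq> Leaf \<Longrightarrow> rt (map_tree f t) = f (rt t)"
  by (cases t) auto

lemma map_props: "\<forall>x\<in>set_tree t. \<forall>y\<in>set_tree t. (f x < f y) = (x < y) \<Longrightarrow>
  inc (map_tree f t) = inc t \<and> aT (map_tree f t) = aT t"
proof (induction t)
  case Leaf then show ?case by simp
next
  case (Node l a r)
  have IH: "inc (map_tree f l) = inc l \<and> aT (map_tree f l) = aT l"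
    "inc (map_tree f r) = inc r \<and> aT (map_tree f r) = aT r"
    using Node by auto
  have lf: "(map_tree f l = Leaf) = (l = Leaf)" "(map_tree f r = Leaf) = (r = Leaf)"
    by (cases l; simp) (cases r; simp)
  have c: "(l \<noteq> Leaf \<longrightarrow> r \<noteq> Leaf \<and> rt (map_tree f r) < rt (map_tree f l)) =
        (l \<noteq> Leaf \<longrightarrow> r \<noteq> Leaf \<and> rt r < rt l)"
  proof (cases "l \<noteq> Leaf \<and> r \<noteq> Leaf")
    case True
    then have "(f (rt r) < f (rt l)) = (rt r < rt l)"
      using Node.prems rt_in[of l] rt_in[of r] by auto
    then show ?thesis using True by (simp add: rt_map)
  qed auto
  have i1: "(\<forall>x\<in>set_tree (map_tree f l). f a < x) = (\<forall>x\<in>set_tree l. a < x)"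
    using Node.prems by (auto simp: tree.set_map)
  have i2: "(\<forall>x\<in>set_tree (map_tree f r). f a < x) = (\<forall>x\<in>set_tree r. a < x)"
    using Node.prems by (auto simp: tree.set_map)
  have "inc (map_tree f (Node l a r)) = inc (Node l a r)"
    using i1 i2 IH by (simp only: tree.map inc.simps)
  moreover have "aT (map_tree f (Node l a r)) = aT (Node l a r)"
    using c IH lf by (simp only: tree.map aT.simps)
  ultimately show ?case by blast
qed

lemma perm_of_mset: "perm_of n xs \<longleftrightarrow> mset xs = mset_set {1..n}"
proof
  assume "perm_of n xs"
  then show "mset xs = mset_set {1..n}" unfolding perm_of_def by (metis mset_set_set)
next
  assume h: "mset xs = mset_set {1..n}"
  have "set xs = {1..n}" by (metis h finite_atLeastAtMost finite_set_mset_mset_set set_mset_mset)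
  moreover have "distinct xs"
  proof (rule card_distinct)
    have "length xs = size (mset xs)" by simp
    also have "\<dots> = n" using h by simp
    finally show "card (set xs) = length xs" using \<open>set xs = {1..n}\<close> by simp
  qed
  ultimately show "perm_of n xs" unfolding perm_of_def by simp
qed

lemma mset_set_0n: "mset_set {1..n} + {#0::nat#} = mset_set {0..<n} + {#n#}"
proof -
  have "{0..n} = insert 0 {1..n}" by auto
  then have a: "mset_set {0..n} = add_mset 0 (mset_set {1..n})" by simp
  have "{0..n} = insert n {0..<n}" by auto
  then have b: "mset_set {0..n} = add_mset n (mset_set {0..<n})" by simp
  show ?thesis using a b by simp
qed

lemma dd_prune_all:
  assumes "inc t" "set_tree t = {1..n}" "n \<ge> 1"
    and "\<forall>k\<in>{1..n}. dT (prune k t)"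
  shows "\<forall>k. dT (prune k t)"
proof
  fix k
  show "dT (prune k t)"
  proof (cases "k = 0")
    case True
    then have "prune k t = Leaf" using assms by (intro prune_Leaf_small) auto
    then show ?thesis by simp
  next
    case False
    show ?thesis
    proof (cases "k \<le> n")
      case True then show ?thesis using assms False by auto
    next
      case False
      then have "prune k t = t" "prune n t = t" using assms by (auto intro!: prune_big)
      then show ?thesis using assms by (metis atLeastAtMost_iff order_refl)
    qed
  qed
qed

lemma RS_to_A:
  assumes "\<sigma> \<in> RS n T" "n \<ge> 1" "T \<in> URL n"
  shows "inorder (map_tree Suc (Gm (Psi \<sigma>) 0)) \<in> AndII n T \<and>
         inorder (Fm (map_tree (\<lambda>x. x - 1) (Psi (inorder (map_tree Suc (Gm (Psi \<sigma>) 0))))) n) = \<sigma>"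
proof -
  let ?t = "Psi \<sigma>"
  have sim: "simsun n \<sigma>" and sh: "shape ?t = T" using assms(1) by (auto simp: RS_def)
  have pm: "perm_of n \<sigma>" and nth: "\<sigma> ! (n - 1) = n"
    and ddk: "\<forall>k\<in>{1..n}. double_descent_free (filter (\<lambda>x. x \<le> k) \<sigma>)"
    using sim by (auto simp: simsun_def)
  have dist: "distinct \<sigma>" and setn: "set \<sigma> = {1..n}" using pm by (auto simp: perm_of_def)
  have ms: "mset \<sigma> = mset_set {1..n}" using pm perm_of_mset by blast
  have len: "length \<sigma> = n" using dist setn distinct_card by fastforce
  have io: "inorder ?t = \<sigma>" by (rule inorder_Psi)
  have inct: "inc ?t" using dist by (rule inc_Psi)
  have sett: "set_tree ?t = {1..n}" using setn by (simp add: set_Psi)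
  have tne: "?t \<noteq> Leaf" using io len assms(2) by auto
  have sne: "\<sigma> \<noteq> []" using len assms(2) by auto
  have "last \<sigma> = n" using last_conv_nth[OF sne] nth len by simp
  then have lst: "lastsp ?t = n" using last_inorder[OF tne] io by simp
  have "\<forall>k\<in>{1..n}. dT (prune k ?t)"
  proof
    fix k assume "k \<in> {1..n}"
    then have "double_descent_free (filter (\<lambda>x. x \<le> k) \<sigma>)" using ddk by blast
    moreover have "dd (inorder (prune k ?t)) = dT (prune k ?t)" by (rule dd_dT[OF inc_prune[OF inct]])
    moreover have "inorder (prune k ?t) = filter (\<lambda>x. x \<le> k) \<sigma>" using inorder_prune[OF inct] io by simp
    ultimately show "dT (prune k ?t)" by (simp add: ddf_dd)
  qed
  then have "\<forall>k. dT (prune k ?t)" using dd_prune_all inct sett assms(2) by blast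
  then have rs: "rsT ?t" using DR[OF inct] io dist by simp
  have nlo: "no_left_only T" using assms(3) by (simp add: URL_def)
  let ?g = "Gm ?t 0"
  have incg: "inc ?g" using inct sett by (intro inc_Gm) auto
  have aTg: "aT ?g" using inct rs nlo sh by (intro aT_Gm) auto
  have msg: "mset (inorder ?g) = mset_set {0..<n}"
    using mset_Gm[OF tne, of 0] lst io ms mset_set_0n[of n] by simp
  let ?u = "map_tree Suc ?g"
  have mono: "\<forall>x\<in>set_tree ?g. \<forall>y\<in>set_tree ?g. (Suc x < Suc y) = (x < y)" by simp
  have incu: "inc ?u" and aTu: "aT ?u" using map_props[OF mono] incg aTg by auto
  have "mset (inorder ?u) = image_mset Suc (mset_set {0..<n})"
    using msg by (simp add: tree.map_comp inorder_map)
  also have "\<dots> = mset_set {1..n}"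
    by (subst image_mset_mset_set) (auto simp: image_Suc_atLeastLessThan)
  finally have msu: "mset (inorder ?u) = mset_set {1..n}" .
  then have pu: "perm_of n (inorder ?u)" using perm_of_mset by blast
  then have du: "distinct (inorder ?u)" by (simp add: perm_of_def)
  have an: "andre_II (inorder ?u)" using andre_aT incu du aTu by blast
  have Pu: "Psi (inorder ?u) = ?u" using Psi_inorder incu du by blast
  have shu: "shape (Psi (inorder ?u)) = T" using Pu sh by (simp add: shape_map shape_Gm)
  have bk: "map_tree (\<lambda>x. x - 1) ?u = ?g" by (simp add: tree.map_comp o_def tree.map_ident)
  have "Fm ?g n = ?t" using FG[OF tne, of 0] lst by simp
  then show ?thesis using pu an shu Pu bk io by (simp add: AndII_def)
qed

lemma A_to_RS:
  assumes "\<tau> \<in> AndII n T" "n \<ge> 1"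
  shows "inorder (Fm (map_tree (\<lambda>x. x - 1) (Psi \<tau>)) n) \<in> RS n T \<and>
         inorder (map_tree Suc (Gm (Psi (inorder (Fm (map_tree (\<lambda>x. x - 1) (Psi \<tau>)) n))) 0)) = \<tau>"
proof -
  let ?w = "Psi \<tau>"
  have pm: "perm_of n \<tau>" and an: "andre_II \<tau>" and sh: "shape ?w = T"
    using assms(1) by (auto simp: AndII_def)
  have dist: "distinct \<tau>" and setn: "set \<tau> = {1..n}" using pm by (auto simp: perm_of_def)
  have ms: "mset \<tau> = mset_set {1..n}" using pm perm_of_mset by blast
  have io: "inorder ?w = \<tau>" by (rule inorder_Psi)
  have incw: "inc ?w" using dist by (rule inc_Psi)
  have setw: "set_tree ?w = {1..n}" using setn by (simp add: set_Psi)
  have wne: "?w \<noteq> Leaf" using setw assms(2) by auto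
  have "andre_II (inorder ?w) = aT ?w" by (rule andre_aT[OF incw]) (simp add: io dist)
  then have aTw: "aT ?w" using io an by simp
  have "Min {1..n} = (1::nat)" using assms(2) by (intro Min_eqI) auto
  then have rtw: "rt ?w = 1"
    using inc_Min[OF incw wne] setw by simp
  let ?w' = "map_tree (\<lambda>x. x - 1) ?w"
  have mono: "\<forall>x\<in>set_tree ?w. \<forall>y\<in>set_tree ?w. ((x - 1) < (y - 1)) = (x < y)"
    using setw by auto
  have incw': "inc ?w'" and aTw': "aT ?w'" using map_props[OF mono] incw aTw by auto
  have w'ne: "?w' \<noteq> Leaf" using wne by (cases ?w) auto
  have rtw': "rt ?w' = 0" using rt_map[OF wne] rtw by simp
  have img: "(\<lambda>x. x - 1) ` {1..n} = {0..<n}"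
  proof
    show "(\<lambda>x. x - 1) ` {1..n} \<subseteq> {0..<n}" by auto
    show "{0..<n} \<subseteq> (\<lambda>x. x - 1) ` {1..n}"
    proof
      fix x assume "x \<in> {0..<n}"
      then have "Suc x \<in> {1..n}" "x = Suc x - 1" by auto
      then show "x \<in> (\<lambda>x. x - 1) ` {1..n}" by blast
    qed
  qed
  have inj: "inj_on (\<lambda>x. x - 1) {1..n::nat}" by (auto simp: inj_on_def)
  have "mset (inorder ?w') = image_mset (\<lambda>x. x - 1) (mset \<tau>)" using io by (simp add: inorder_map)
  also have "\<dots> = image_mset (\<lambda>x. x - 1) (mset_set {1..n})" using ms by (simp only:)
  also have "\<dots> = mset_set ((\<lambda>x. x - 1) ` {1..n})" by (rule image_mset_mset_set[OF inj])
  also have "\<dots> = mset_set {0..<n}" by (simp only: img)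
  finally have msw': "mset (inorder ?w') = mset_set {0..<n}" .
  have setw': "set_tree ?w' = {0..<n}"
    by (metis msw' set_inorder set_mset_mset finite_atLeastLessThan finite_set_mset_mset_set)
  let ?v = "Fm ?w' n"
  have incv: "inc ?v" using incw' aTw' setw' by (intro inc_Fm) auto
  have rsv: "rsT ?v" using aTw' by (rule rsT_Fm)
  have lv: "lastsp ?v = n" using lastsp_Fm[OF w'ne] .
  have "mset (inorder ?v) + {#0#} = mset_set {1..n} + {#0#}"
    using mset_Fm[OF w'ne, of n] rtw' msw' mset_set_0n[of n] by simp
  then have msv: "mset (inorder ?v) = mset_set {1..n}" by simp
  have pv: "perm_of n (inorder ?v)" using msv perm_of_mset by blast
  have dv: "distinct (inorder ?v)" using pv by (simp add: perm_of_def)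
  have lenv: "length (inorder ?v) = n" by (metis msv size_mset size_mset_set card_atLeastAtMost diff_Suc_1)
  have vne: "?v \<noteq> Leaf" using lenv assms(2) by auto
  have nthv: "inorder ?v ! (n - 1) = n"
    using last_inorder[OF vne] lv lenv vne by (metis last_conv_nth inorder_nonempty)
  have allk: "\<forall>k. dT (prune k ?v)" using DR incv dv rsv by blast
  have ddk: "\<forall>k\<in>{1..n}. double_descent_free (filter (\<lambda>x. x \<le> k) (inorder ?v))"
  proof
    fix k
    have "dd (inorder (prune k ?v)) = dT (prune k ?v)" by (rule dd_dT[OF inc_prune[OF incv]])
    moreover have "inorder (prune k ?v) = filter (\<lambda>x. x \<le> k) (inorder ?v)" using inorder_prune[OF incv] by simp
    ultimately show "double_descent_free (filter (\<lambda>x. x \<le> k) (inorder ?v))" using allk by (simp add: ddf_dd)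
  qed
  have Pv: "Psi (inorder ?v) = ?v" using Psi_inorder incv dv by blast
  have shv: "shape (Psi (inorder ?v)) = T" using Pv sh by (simp add: shape_map shape_Fm)
  have inRS: "inorder ?v \<in> RS n T" using pv nthv ddk shv by (simp add: RS_def simsun_def)
  have "Gm ?v 0 = ?w'" using GF[OF w'ne, of n] rtw' by simp
  moreover have "map_tree Suc ?w' = ?w"
    using setw by (auto simp: tree.map_comp o_def intro!: tree.map_ident_strong)
  ultimately show ?thesis using inRS Pv io by simp
qed

theorem theorem4p1:
  fixes n :: nat and T :: "unit tree"
  assumes "n \<ge> 1" and "T \<in> URL n"
  shows "\<exists>\<Omega>. bij_betw \<Omega> (RS n T) (AndII n T)"
proof
  show "bij_betw (\<lambda>\<sigma>. inorder (map_tree Suc (Gm (Psi \<sigma>) 0))) (RS n T) (AndII n T)"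
    by (rule bij_betw_byWitness[where f' = "\<lambda>\<tau>. inorder (Fm (map_tree (\<lambda>x. x - 1) (Psi \<tau>)) n)"])
       (use RS_to_A[OF _ assms(1) assms(2)] A_to_RS[OF _ assms(1)] in auto)
qed

end
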